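(* Let $M$ be a complete smooth Riemannian manifold of dimension $d$, $Z$ a $C^1$ vector field on $M$, fix $x\in M$, $u_0\in\pi^{-1}(x)$ and $T>0$, and let $u_t$, $\gamma_t$, $\mathrm{ric}_Z$, $D_tF$, $\tilde D_tF$ be as in the context. Assume that for constants $K_1\ge 0$, $K_2\neq 0$ with $K_1+K_2\ge 0$ one has, for all $u\in O(M)$, $$K_2\,\mathrm{Id}\le \mathrm{ric}_Z^s(u):=\tfrac12\big(\mathrm{ric}_Z(u)+\mathrm{ric}_Z(u)^*\big),\qquad |||\mathrm{ric}_Z(u)|||\le K_1 .$$ For $0<t\le T$ set $$\Lambda(t,T)=1+\frac{K_1}{K_2}\Big(1-e^{-\frac{K_2(T-t)}{2}}\Big)+\frac{K_1}{K_2}\Big(1-e^{-\frac{K_2t}{2}}\Big)+\Big(\frac{K_1}{K_2}\Big)^2\Big[\Big(1-e^{-\frac{K_2t}{2}}\Big)+\frac12\Big(e^{-\frac{K_2(T+t)}{2}}-e^{-\frac{K_2(T-t)}{2}}\Big)\Big].$$ Then for every cylindrical function $F$ on $W_x^T(M)$, $$\int_0^T|\tilde D_tF|^2\,dt\le\int_0^T\Lambda(t,T)\,|D_tF|^2\,dt$$ (almost surely).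
   Context: $\mathrm{Ric}_Z=\mathrm{Ric}+\nabla Z$ (as an endomorphism field of $TM$). $O(M)$ is the orthonormal frame bundle, $\pi:O(M)\to M$ the projection, $H_1,\dots,H_d$ the canonical horizontal vector fields and $H_Z$ the horizontal lift of $Z$. Let $w$ be a standard Brownian motion on $\mathbb R^d$ with filtration $\mathcal F_t$, and $u_t$ the solution of the Stratonovich SDE $du_t=\sum_{i=1}^dH_i(u_t)\circ dw^i_t-\tfrac12H_Z(u_t)\,dt$, $u_0$ given; $\gamma_t=\pi(u_t)$. $W_x^T(M)$ is the space of continuous paths $\gamma:[0,T]\to M$ with $\gamma(0)=x$, equipped with the law $\mu_{x,T}$ of $\gamma_\cdot$. The equivariant Ricci tensor is $\mathrm{ric}_Z(u)=u^{-1}\circ\mathrm{Ric}_Z(\pi(u))\circ u$ (a $d\times d$ matrix); $^*$ denotes transpose and $|||\cdot|||$ the operator norm. A cylindrical function is $F(\gamma)=f(\gamma(t_1),\dots,\gamma(t_N))$ with $0\le t_1<\dots<t_N\le T$ and $f\in C_b^1(M^N)$; its gradient is $D_\tau F=\sum_{j=1}^N u_{t_j}^{-1}(\partial_jf)(\gamma_{t_1},\dots,\gamma_{t_N})\mathbf 1_{\tau\le t_j}$, where $\partial_j$ is the gradient in the $j$-th variable. Let $Q_{t,s}$ ($t\ge s$) solve $\frac{d}{dt}Q_{t,s}=-\frac12\mathrm{ric}_Z(u_t)Q_{t,s}$, $Q_{s,s}=\mathrm{Id}$. The damped gradient is $\tilde D_\tau F=\sum_{j=1}^NQ_{t_j,\tau}^*\big(u_{t_j}^{-1}\partial_jf\big)\mathbf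 1_{\tau\le t_j}$. *)

theory Defs
  imports "HOL-Analysis.Analysis"
begin

text \<open>Along a fixed sample path,
  ric t stands for the d x d matrix ric_Z(u_t), Q t s for the damping matrix Q_{t,s},
  ts j (j < N) for the times t_1 < ... < t_N of a cylindrical function and
  vs j for the vectors u_{t_j}^{-1} (partial_j f)(gamma_{t_1},...,gamma_{t_N}) in R^d.\<close>

definition Lambda :: "real \<Rightarrow> real \<Rightarrow> real \<Rightarrow> real \<Rightarrow> real" where
  "Lambda K1 K2 t T =
     1 + (K1 / K2) * (1 - exp (- K2 * (T - t) / 2))
       + (K1 / K2) * (1 - exp (- K2 * t / 2))
       + (K1 / K2)^2 * ((1 - exp (- K2 * t / 2))
            + (1/2) * (exp (- K2 * (T + t) / 2) - exp (- K2 * (T - t) / 2)))"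

definition cyl_grad :: "nat \<Rightarrow> (nat \<Rightarrow> real) \<Rightarrow> (nat \<Rightarrow> real^'n) \<Rightarrow> real \<Rightarrow> real^'n" where
  "cyl_grad N ts vs \<tau> = (\<Sum>j<N. if \<tau> \<le> ts j then vs j else 0)"

definition damped_grad :: "(real \<Rightarrow> real \<Rightarrow> real^'n^'n) \<Rightarrow> nat \<Rightarrow> (nat \<Rightarrow> real)
     \<Rightarrow> (nat \<Rightarrow> real^'n) \<Rightarrow> real \<Rightarrow> real^'n" where
  "damped_grad Q N ts vs \<tau> =
     (\<Sum>j<N. if \<tau> \<le> ts j then transpose (Q (ts j) \<tau>) *v vs j else 0)"

end

theory Submission imports Defs begin

lemma blin_mv: "bounded_linear (\<lambda>A::real^'n^'m. A *v x)"
proof -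
  have "linear (\<lambda>A::real^'n^'m. A *v x)"
    by (rule linearI) (auto simp: matrix_vector_mult_add_rdistrib scaleR_matrix_vector_assoc[symmetric])
  then show ?thesis by (simp add: linear_conv_bounded_linear)
qed

lemma blin_vm: "bounded_linear (\<lambda>A::real^'n^'m. x v* A)"
proof -
  have "linear (\<lambda>A::real^'n^'m. x v* A)"
    by (rule linearI) (auto simp: vector_matrix_mult_def sum.distrib algebra_simps vec_eq_iff sum_distrib_left)
  then show ?thesis by (simp add: linear_conv_bounded_linear)
qed

lemma blin_vd:
  assumes "bounded_linear L" "(g has_vector_derivative g') F"
  shows "((\<lambda>x. L (g x)) has_vector_derivative L g') F"
  using bounded_linear.has_derivative[OF assms(1) assms(2)[unfolded has_vector_derivative_def]]
  unfolding has_vector_derivative_def by (simp add: linear_scale[OF bounded_linear.linear[OF assms(1)]])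

lemma transpose_bound:
  fixes A :: "real^'n^'n"
  assumes "\<And>x. norm (A *v x) \<le> c * norm x"
  shows "norm (y v* A) \<le> c * norm y"
proof -
  define z where "z = y v* A"
  have "norm z ^ 2 = y \<bullet> (A *v z)" unfolding z_def by (simp add: dot_lmul_matrix power2_norm_eq_inner)
  also have "\<dots> \<le> norm y * norm (A *v z)" by (rule norm_cauchy_schwarz)
  also have "\<dots> \<le> norm y * (c * norm z)" by (simp add: assms mult_left_mono)
  finally have h: "norm z ^ 2 \<le> c * norm y * norm z" by (simp add: algebra_simps)
  show ?thesis
  proof (cases "norm z = 0")
    case True
    then show ?thesis using assms[of 0] h
      by (smt (verit) norm_ge_zero z_def assms mult_nonneg_nonneg norm_zero zero_le_mult_iff)
  next
    case False
    then have "norm z > 0" by simp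
    with h show ?thesis unfolding z_def by (simp add: power2_eq_square)
  qed
qed


lemma neg_mv: "(- A) *v x = - (A *v (x::real^'n))"
  by (simp add: matrix_vector_mult_def vec_eq_iff sum_negf)

lemma inner_vd:
  assumes "(y has_vector_derivative y') (at s within S)"
  shows "((\<lambda>s. y s \<bullet> y s) has_real_derivative (2 * (y s \<bullet> y'))) (at s within S)"
proof -
  have "((\<lambda>s. y s \<bullet> y s) has_derivative (\<lambda>h. y s \<bullet> (h *\<^sub>R y') + (h *\<^sub>R y') \<bullet> y s)) (at s within S)"
    using has_derivative_inner[OF assms[unfolded has_vector_derivative_def] assms[unfolded has_vector_derivative_def]] .
  moreover have "(\<lambda>h. y s \<bullet> (h *\<^sub>R y') + (h *\<^sub>R y') \<bullet> y s) = (*) (2 * (y s \<bullet> y'))"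
    by (auto simp: inner_commute algebra_simps)
  ultimately show ?thesis by (simp add: has_field_derivative_def)
qed

lemma Q_bound:
  fixes ric :: "real \<Rightarrow> real^'n^'n" and Q :: "real \<Rightarrow> real \<Rightarrow> real^'n^'n"
  assumes lower: "\<And>t x. t \<in> {0..T} \<Longrightarrow>
         K2 * (x \<bullet> x) \<le> x \<bullet> ((1/2) *\<^sub>R (ric t + transpose (ric t)) *v x)"
    and Q_ode: "\<And>s t. 0 \<le> s \<Longrightarrow> s \<le> t \<Longrightarrow> t \<le> T \<Longrightarrow>
         ((\<lambda>r. Q r s) has_vector_derivative (- (1/2)) *\<^sub>R (ric t ** Q t s)) (at t within {s..T})"
    and Q_init: "\<And>s. 0 \<le> s \<Longrightarrow> s \<le> T \<Longrightarrow> Q s s = mat 1"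
    and tau: "0 \<le> \<tau>" "\<tau> \<le> r" "r \<le> T"
  shows "norm (Q r \<tau> *v x) \<le> exp (- K2 * (r - \<tau>) / 2) * norm x"
proof -
  have low: "K2 * (y \<bullet> y) \<le> y \<bullet> (ric t *v y)" if "t \<in> {0..T}" for t y
  proof -
    have "y \<bullet> ((1/2) *\<^sub>R (ric t + transpose (ric t)) *v y) = y \<bullet> (ric t *v y)"
      by (simp add: scaleR_matrix_vector_assoc[symmetric] matrix_vector_mult_add_rdistrib
          inner_add_right dot_lmul_matrix[symmetric] inner_commute[of y "y v* ric t"])
    then show ?thesis using lower[OF that, of y] by simp
  qed
  define y where "y s = Q s \<tau> *v x" for s
  have dy: "(y has_vector_derivative (-(1/2)) *\<^sub>R (ric s *v y s)) (at s within {\<tau>..T})"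
    if "s \<in> {\<tau>..T}" for s
  proof -
    have "((\<lambda>r. Q r \<tau> *v x) has_vector_derivative ((- (1/2)) *\<^sub>R (ric s ** Q s \<tau>)) *v x) (at s within {\<tau>..T})"
      using blin_vd[OF blin_mv Q_ode[of \<tau> s]] that tau by auto
    then show ?thesis
      by (simp add: y_def[abs_def] neg_mv scaleR_matrix_vector_assoc[symmetric] matrix_vector_mul_assoc)
  qed
  define psi where "psi s = exp (K2 * (s - \<tau>)) * (y s \<bullet> y s)" for s
  define psid where "psid s = exp (K2 * (s - \<tau>)) * (K2 * (y s \<bullet> y s) - y s \<bullet> (ric s *v y s))" for s
  have dpsi: "(psi has_derivative (\<lambda>h. h * psid s)) (at s within {\<tau>..r})" if "s \<in> {\<tau>..r}" for s
  proof -
    have d1: "((\<lambda>s. y s \<bullet> y s) has_real_derivative (2 * (y s \<bullet> ((-(1/2)) *\<^sub>R (ric s *v y s))))) (at s within {\<tau>..r})"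
      using inner_vd[OF has_vector_derivative_within_subset[OF dy, of s "{\<tau>..r}"]] that tau by auto
    have d2: "((\<lambda>s. exp (K2 * (s - \<tau>))) has_real_derivative (exp (K2 * (s - \<tau>)) * K2)) (at s within {\<tau>..r})"
      by (auto intro!: derivative_eq_intros)
    have "(psi has_real_derivative (exp (K2 * (s - \<tau>)) * K2 * (y s \<bullet> y s) + 
          exp (K2 * (s - \<tau>)) * (2 * (y s \<bullet> ((-(1/2)) *\<^sub>R (ric s *v y s)))))) (at s within {\<tau>..r})"
      unfolding psi_def using DERIV_mult[OF d2 d1] by (simp add: mult.commute)
    moreover have "exp (K2 * (s - \<tau>)) * K2 * (y s \<bullet> y s) + 
          exp (K2 * (s - \<tau>)) * (2 * (y s \<bullet> ((-(1/2)) *\<^sub>R (ric s *v y s)))) = psid s"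
      unfolding psid_def by (simp add: algebra_simps)
    ultimately have "(psi has_derivative (*) (psid s)) (at s within {\<tau>..r})"
      by (simp add: has_field_derivative_def)
    moreover have "(*) (psid s) = (\<lambda>h. h * psid s)" by (auto simp: mult.commute)
    ultimately show ?thesis by simp
  qed
  obtain c where c: "c \<in> {\<tau>..r}" and eq: "psi r - psi \<tau> = (r - \<tau>) * psid c"
    using mvt_very_simple[of \<tau> r psi "\<lambda>s h. h * psid s"] dpsi tau by auto
  have "psid c \<le> 0" unfolding psid_def using low[of c "y c"] c tau
    by (intro mult_nonneg_nonpos) auto
  then have "psi r \<le> psi \<tau>" using eq tau by (smt (verit) mult_nonneg_nonpos)
  moreover have "psi \<tau> = x \<bullet> x" using Q_init[of \<tau>] tau by (simp add: psi_def y_def)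
  ultimately have "exp (K2 * (r - \<tau>)) * (norm (y r))^2 \<le> (norm x)^2"
    by (simp add: psi_def power2_norm_eq_inner)
  then have "exp (- K2 * (r - \<tau>)) * (exp (K2 * (r - \<tau>)) * (norm (y r))^2) \<le> exp (- K2 * (r - \<tau>)) * (norm x)^2"
    by (rule mult_left_mono) simp
  then have "(norm (y r))^2 \<le> exp (- K2 * (r - \<tau>)) * (norm x)^2"
    by (simp add: mult.assoc[symmetric] exp_add[symmetric])
  also have "\<dots> = (exp (- K2 * (r - \<tau>) / 2) * norm x)^2"
    by (simp add: power_mult_distrib exp_double[symmetric] power2_eq_square exp_add[symmetric])
  finally show ?thesis unfolding y_def by (rule power2_le_imp_le) simp
qed


lemma vm_sum: "finite A \<Longrightarrow> (\<Sum>j\<in>A. w j) v* (M::real^'n^'m) = (\<Sum>j\<in>A. w j v* M)"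
proof (induction A rule: finite_induct)
  case empty
  then show ?case by (simp add: vector_matrix_mult_def vec_eq_iff)
next
  case (insert x F)
  then show ?case by (simp add: vector_matrix_left_distrib)
qed

lemma step_bound: "norm (\<Sum>j<N. if P j then (vs j::real^'n) else 0) \<le> (\<Sum>j<N. norm (vs j))"
  by (rule order_trans[OF norm_sum]) (auto intro!: sum_mono)

lemma step_meas: "(\<lambda>s. norm (\<Sum>j<N. if P s j then (vs j::real^'n) else 0)) \<in> borel_measurable borel"
  if "\<And>j. {s. P s j} \<in> sets borel"
proof -
  have "(\<lambda>s. if P s j then (vs j::real^'n) else 0) \<in> borel_measurable borel" for j
  proof (rule measurable_If[OF measurable_const measurable_const])
    show "0 \<in> space borel" "vs j \<in> space borel" by auto
    have "{s \<in> space borel. P s j} = {s. P s j}" by auto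
    then show "{s \<in> space borel. P s j} \<in> sets borel" using that[of j] by metis
  qed
  then have "(\<lambda>s. (\<Sum>j<N. if P s j then (vs j::real^'n) else 0)) \<in> borel_measurable borel"
    by (intro borel_measurable_sum) auto
  then show ?thesis using measurable_comp[OF _ borel_measurable_norm] by (simp add: comp_def)
qed

lemma int_prodc:
  fixes h c :: "real \<Rightarrow> real"
  assumes h: "h \<in> borel_measurable borel" and hb: "\<And>x. \<bar>h x\<bar> \<le> B"
    and c: "continuous_on {a..b} c"
  shows "(\<lambda>x. h x * c x) integrable_on {a..b}"
proof -
  have "h \<in> borel_measurable (lebesgue_on {a..b})"
    using measurable_comp[OF id_borel_measurable_lebesgue_on h] by (simp add: comp_def)
  moreover have "bounded (h ` {a..b})" using hb unfolding bounded_iff by (metis image_iff real_norm_def)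
  ultimately have "(\<lambda>x. h x * c x) absolutely_integrable_on {a..b}"
    by (intro absolutely_integrable_bounded_measurable_product_real absolutely_integrable_continuous_real[OF c]) auto
  then show ?thesis by (rule set_lebesgue_integral_eq_integral(1))
qed


lemma Q_cont:
  fixes ric :: "real \<Rightarrow> real^'n^'n" and Q :: "real \<Rightarrow> real \<Rightarrow> real^'n^'n"
  assumes Q_ode: "\<And>s t. 0 \<le> s \<Longrightarrow> s \<le> t \<Longrightarrow> t \<le> T \<Longrightarrow>
         ((\<lambda>r. Q r s) has_vector_derivative (- (1/2)) *\<^sub>R (ric t ** Q t s)) (at t within {s..T})"
    and "0 \<le> \<tau>"
  shows "continuous_on {\<tau>..T} (\<lambda>r. Q r \<tau>)"
  unfolding continuous_on_eq_continuous_within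
  using assms(2) by (auto intro!: has_vector_derivative_continuous[OF Q_ode[of \<tau>]])

lemma pointwise:
  fixes ric :: "real \<Rightarrow> real^'n^'n"
    and Q :: "real \<Rightarrow> real \<Rightarrow> real^'n^'n"
    and K1 K2 T :: real
    and N :: nat and ts :: "nat \<Rightarrow> real" and vs :: "nat \<Rightarrow> real^'n"
  assumes "K1 \<ge> 0"
    and lower: "\<And>t x. t \<in> {0..T} \<Longrightarrow>
         K2 * (x \<bullet> x) \<le> x \<bullet> ((1/2) *\<^sub>R (ric t + transpose (ric t)) *v x)"
    and upper: "\<And>t. t \<in> {0..T} \<Longrightarrow> onorm (\<lambda>x. ric t *v x) \<le> K1"
    and Q_ode: "\<And>s t. 0 \<le> s \<Longrightarrow> s \<le> t \<Longrightarrow> t \<le> T \<Longrightarrow>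
         ((\<lambda>r. Q r s) has_vector_derivative (- (1/2)) *\<^sub>R (ric t ** Q t s)) (at t within {s..T})"
    and Q_init: "\<And>s. 0 \<le> s \<Longrightarrow> s \<le> T \<Longrightarrow> Q s s = mat 1"
    and ts_range: "\<And>j. j < N \<Longrightarrow> 0 \<le> ts j \<and> ts j \<le> T"
    and tau: "0 \<le> \<tau>" "\<tau> \<le> T"
  shows "norm (damped_grad Q N ts vs \<tau>) \<le> norm (cyl_grad N ts vs \<tau>)
     + integral {\<tau>..T} (\<lambda>r. K1/2 * exp (- K2 * (r - \<tau>) / 2) * norm (cyl_grad N ts vs r))"
proof -
  define S where "S = ts ` {..<N}"
  have finS: "finite S" unfolding S_def by simp
  define Ev where "Ev r = (\<Sum>j<N. if \<tau> \<le> ts j then vs j v* Q (min (ts j) r) \<tau> else 0)" for r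
  define Dp where "Dp r = (\<Sum>j<N. if r < ts j then vs j else 0)" for r
  define Ev' where "Ev' r = (-(1/2)) *\<^sub>R ((Dp r v* ric r) v* Q r \<tau>)" for r
  define td where "td j r = (if r < ts j then (-(1/2)) *\<^sub>R ((vs j v* ric r) v* Q r \<tau>) else 0)" for j r
  have Ev'_sum: "Ev' r = (\<Sum>j<N. td j r)" for r
  proof -
    have "Dp r v* ric r = (\<Sum>j<N. (if r < ts j then vs j else 0) v* ric r)"
      unfolding Dp_def by (rule vm_sum) simp
    also have "\<dots> = (\<Sum>j<N. if r < ts j then vs j v* ric r else 0)"
      by (rule sum.cong) (auto simp: vector_matrix_mult_def vec_eq_iff)
    finally have "Dp r v* ric r v* Q r \<tau> = (\<Sum>j<N. (if r < ts j then vs j v* ric r else 0) v* Q r \<tau>)"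
      by (simp add: vm_sum)
    also have "\<dots> = (\<Sum>j<N. if r < ts j then vs j v* ric r v* Q r \<tau> else 0)"
      by (rule sum.cong) (auto simp: vector_matrix_mult_def vec_eq_iff)
    finally have eq: "Dp r v* ric r v* Q r \<tau> = (\<Sum>j<N. if r < ts j then vs j v* ric r v* Q r \<tau> else 0)" .
    show ?thesis unfolding Ev'_def td_def eq scaleR_sum_right by (auto intro!: sum.cong)
  qed
  have deriv: "(Ev has_vector_derivative Ev' x) (at x)" if x: "x \<in> {\<tau><..<T} - S" for x
  proof -
    have "((\<lambda>r. if \<tau> \<le> ts j then vs j v* Q (min (ts j) r) \<tau> else 0) has_vector_derivative td j x) (at x)"
      if j: "j < N" for j
    proof (cases "x < ts j")
      case True
      have dQ: "((\<lambda>r. Q r \<tau>) has_vector_derivative (- (1/2)) *\<^sub>R (ric x ** Q x \<tau>)) (at x)"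
      proof -
        have "((\<lambda>r. Q r \<tau>) has_vector_derivative (- (1/2)) *\<^sub>R (ric x ** Q x \<tau>)) (at x within {\<tau><..<T})"
          apply (rule has_vector_derivative_within_subset[OF Q_ode[of \<tau> x]])
          using x tau by auto
        then show ?thesis using at_within_open[of x "{\<tau><..<T}"] x by auto
      qed
      have "((\<lambda>r. vs j v* Q r \<tau>) has_vector_derivative vs j v* ((- (1/2)) *\<^sub>R (ric x ** Q x \<tau>))) (at x)"
        by (rule blin_vd[OF blin_vm dQ])
      moreover have "vs j v* ((- (1/2)) *\<^sub>R (ric x ** Q x \<tau>)) = td j x"
      proof -
        have L: "linear (\<lambda>A::real^'n^'n. vs j v* A)" by (rule bounded_linear.linear[OF blin_vm])
        show ?thesis using True unfolding td_def
          by (simp add: linear_neg[OF L] linear_scale[OF L] vector_matrix_mul_assoc)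
      qed
      ultimately show ?thesis
        apply (rule_tac has_vector_derivative_transform_within_open[where S="{\<tau><..<ts j}"])
        using True x by auto
    next
      case False
      then have "ts j < x" using x j unfolding S_def by force
      have hc: "((\<lambda>r. if \<tau> \<le> ts j then vs j v* Q (ts j) \<tau> else 0) has_vector_derivative 0) (at x)"
        by (rule has_vector_derivative_const)
      have "td j x = 0" using False by (simp add: td_def)
      have "((\<lambda>r. if \<tau> \<le> ts j then vs j v* Q (min (ts j) r) \<tau> else 0) has_vector_derivative 0) (at x)"
        apply (rule has_vector_derivative_transform_within_open[OF hc, of "{ts j<..}"])
        using \<open>ts j < x\<close> by (auto simp: min_def)
      then show ?thesis using \<open>td j x = 0\<close> by simp
    qed
    then have "((\<lambda>r. \<Sum>j<N. if \<tau> \<le> ts j then vs j v* Q (min (ts j) r) \<tau> else 0) has_vector_derivative (\<Sum>j<N. td j x)) (at x)"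
      by (intro has_vector_derivative_sum) auto
    then show ?thesis unfolding Ev_def[abs_def] Ev'_sum .
  qed
  have cont: "continuous_on {\<tau>..T} Ev"
    unfolding Ev_def[abs_def]
  proof (intro continuous_on_sum)
    fix j assume j: "j \<in> {..<N}"
    show "continuous_on {\<tau>..T} (\<lambda>r. if \<tau> \<le> ts j then vs j v* Q (min (ts j) r) \<tau> else 0)"
    proof (cases "\<tau> \<le> ts j")
      case True
      have "continuous_on {\<tau>..T} (\<lambda>r. Q (min (ts j) r) \<tau>)"
        apply (rule continuous_on_compose2[OF Q_cont[OF Q_ode tau(1)]])
        using True ts_range[of j] j by (auto intro!: continuous_intros)
      then have "continuous_on {\<tau>..T} (\<lambda>r. vs j v* Q (min (ts j) r) \<tau>)"
        by (rule continuous_on_compose2[OF linear_continuous_on[OF blin_vm]]) auto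
      then show ?thesis using True by simp
    qed simp
  qed
  have ftc: "(Ev' has_integral (Ev T - Ev \<tau>)) {\<tau>..T}"
    by (rule fundamental_theorem_of_calculus_interior_strong[OF finS tau(2) deriv cont])
  define g where "g r = K1/2 * exp (- K2 * (r - \<tau>) / 2) * norm (Dp r)" for r
  have bnd: "norm (Ev' r) \<le> g r" if r: "r \<in> {\<tau>..T}" for r
  proof -
    have "norm (Ev' r) = (1/2) * norm ((Dp r v* ric r) v* Q r \<tau>)" unfolding Ev'_def by simp
    also have "\<dots> \<le> (1/2) * (exp (- K2 * (r - \<tau>) / 2) * norm (Dp r v* ric r))"
      using transpose_bound[of "Q r \<tau>" "exp (- K2 * (r - \<tau>) / 2)"]
        Q_bound[OF lower Q_ode Q_init tau(1), of r] r by auto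
    also have "\<dots> \<le> (1/2) * (exp (- K2 * (r - \<tau>) / 2) * (K1 * norm (Dp r)))"
    proof -
      have "norm (ric r *v x) \<le> K1 * norm x" for x
      proof -
        have "onorm (\<lambda>x. ric r *v x) \<le> K1" using upper[of r] r tau by auto
        then have "onorm (\<lambda>x. ric r *v x) * norm x \<le> K1 * norm x" by (rule mult_right_mono) simp
        moreover have "norm (ric r *v x) \<le> onorm (\<lambda>x. ric r *v x) * norm x"
          by (rule onorm[OF matrix_vector_mul_bounded_linear])
        ultimately show ?thesis by linarith
      qed
      then show ?thesis using transpose_bound[of "ric r" K1 "Dp r"] by (simp add: mult_left_mono)
    qed
    finally show ?thesis unfolding g_def by (simp add: mult_ac)
  qed
  have gint: "g integrable_on {\<tau>..T}"
  proof -
    have "(\<lambda>r. norm (Dp r) * (K1/2 * exp (- K2 * (r - \<tau>) / 2))) integrable_on {\<tau>..T}"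
      unfolding Dp_def
      by (rule int_prodc[OF step_meas, where B="\<Sum>j<N. norm (vs j)"])
         (auto intro!: continuous_intros step_bound)
    then show ?thesis unfolding g_def by (simp add: mult_ac)
  qed
  have "norm (Ev T - Ev \<tau>) \<le> integral {\<tau>..T} g"
    using integral_norm_bound_integral[OF has_integral_integrable[OF ftc] gint bnd]
      integral_unique[OF ftc] by simp
  also have "integral {\<tau>..T} g = integral {\<tau>..T} (\<lambda>r. K1/2 * exp (- K2 * (r - \<tau>) / 2) * norm (cyl_grad N ts vs r))"
  proof (rule integral_spike[OF negligible_finite[OF finS]])
    fix r assume r: "r \<in> {\<tau>..T} - S"
    have "Dp r = cyl_grad N ts vs r" unfolding Dp_def cyl_grad_def
      by (rule sum.cong) (use r in \<open>auto simp: S_def\<close>)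
    then show "K1/2 * exp (- K2 * (r - \<tau>) / 2) * norm (cyl_grad N ts vs r) = g r" by (simp add: g_def)
  qed
  finally have main: "norm (Ev T - Ev \<tau>) \<le> integral {\<tau>..T} (\<lambda>r. K1/2 * exp (- K2 * (r - \<tau>) / 2) * norm (cyl_grad N ts vs r))" .
  have ET: "Ev T = damped_grad Q N ts vs \<tau>"
    unfolding Ev_def damped_grad_def
    by (rule sum.cong) (use ts_range in \<open>auto simp: min_def\<close>)
  have E0: "Ev \<tau> = cyl_grad N ts vs \<tau>"
    unfolding Ev_def cyl_grad_def
    by (rule sum.cong) (use Q_init tau in \<open>auto simp: min_def\<close>)
  have "norm (Ev T) \<le> norm (Ev \<tau>) + norm (Ev T - Ev \<tau>)" by (rule norm_triangle_sub)
  then show ?thesis using main ET E0 by simp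
qed



lemma cs_alg:
  fixes M I E :: real
  assumes h: "\<And>c. 0 \<le> M - 2*c*I + c^2*E" and E: "0 \<le> E"
  shows "I^2 \<le> E*M"
proof (cases "E = 0")
  case True
  have "I = 0"
  proof (rule ccontr)
    assume "I \<noteq> 0"
    have "0 \<le> M - 2*((M+1)/(2*I))*I" using h[of "(M+1)/(2*I)"] True by simp
    also have "\<dots> = -1" using \<open>I \<noteq> 0\<close> by (simp add: field_simps)
    finally show False by simp
  qed
  then show ?thesis using True by simp
next
  case False
  then have Ep: "E > 0" using E by simp
  have "0 \<le> M - 2*(I/E)*I + (I/E)^2*E" by (rule h)
  also have "\<dots> = M - I^2/E" using Ep by (simp add: field_simps power2_eq_square)
  finally have "I^2/E \<le> M" by simp
  then show ?thesis using Ep by (simp add: field_simps mult.commute)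
qed

lemma bound_alg:
  fixes x I E M k :: real
  assumes "I^2 \<le> E*M" "0 \<le> E" "0 \<le> M" "0 \<le> k"
  shows "(x + k*I)^2 \<le> x^2*(1+k*E) + k*(1+k*E)*M"
proof -
  have c: "2*x*I \<le> x^2*E + M"
  proof (cases "E = 0")
    case True
    then have "I = 0" using assms(1) by simp
    then show ?thesis using True assms by simp
  next
    case False
    then have Ep: "E > 0" using assms by simp
    have "0 \<le> (x*E - I)^2" by simp
    then have "2*x*I*E \<le> x^2*E*E + I^2" by (simp add: power2_eq_square algebra_simps)
    also have "\<dots> \<le> x^2*E*E + E*M" using assms(1) by simp
    finally have "(2*x*I)*E \<le> (x^2*E + M)*E" by (simp add: algebra_simps)
    then show ?thesis using Ep by simp
  qed
  have "(x + k*I)^2 = x^2 + k*(2*x*I) + k^2*I^2" by (simp add: power2_eq_square algebra_simps)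
  also have "\<dots> \<le> x^2 + k*(x^2*E + M) + k^2*(E*M)"
    using c assms by (intro add_mono mult_left_mono) auto
  also have "\<dots> = x^2*(1+k*E) + k*(1+k*E)*M" by (simp add: power2_eq_square algebra_simps)
  finally show ?thesis .
qed


lemma exp_eq: "(a::real) + b = c \<Longrightarrow> exp a * exp b = exp c"
  by (simp add: exp_add[symmetric])

lemma Lambda_eq:
  fixes K1 K2 T s :: real
  assumes "K2 \<noteq> 0"
  shows "Lambda K1 K2 s T = 1 + (K1/2) * ((2/K2)*(1 - exp (- K2 * (T - s) / 2)))
     + ((K1/2)*(2/K2)*(exp (K2* s/2) - 1) + (K1/2)^2*(2/K2)*((2/K2)*(exp (K2* s/2) - 1)
          - exp (- K2*T/2)*(exp (K2* s) - 1)/K2)) * exp (- K2* s/2)"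
proof -
  define u where "u = exp (K2* s/2)"
  define w where "w = exp (K2*T/2)"
  have u: "u > 0" and w: "w > 0" by (auto simp: u_def w_def)
  have e1: "exp (- K2 * (T - s) / 2) = u / w"
    using exp_eq[of "- K2 * (T - s) / 2" "K2*T/2" "K2* s/2"] w by (simp add: u_def w_def field_simps)
  have e2: "exp (- K2 * s / 2) = 1 / u"
    using exp_eq[of "- K2 * s / 2" "K2* s/2" 0] u by (simp add: u_def field_simps)
  have e2': "exp (- (K2 * s / 2)) = 1 / u" using e2 by simp
  have e3: "exp (- K2 * (T + s) / 2) = 1 / (u*w)"
    using exp_eq[of "- K2 * (T + s) / 2" "K2* s/2 + K2*T/2" 0] exp_eq[of "K2* s/2" "K2*T/2" "K2* s/2 + K2*T/2"] u w
    by (simp add: u_def w_def field_simps)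
  have e4: "exp (- K2 * T / 2) = 1 / w"
    using exp_eq[of "- K2 * T / 2" "K2*T/2" 0] w by (simp add: w_def field_simps)
  have e4': "exp (- (K2 * T / 2)) = 1 / w" using e4 by simp
  have e5: "exp (K2 * s) = u^2"
    using exp_eq[of "K2* s/2" "K2* s/2" "K2* s"] by (simp add: u_def power2_eq_square)
  show ?thesis unfolding Lambda_def e1 e2 e3 e4 e5 u_def[symmetric] e2' e4'
    using u w assms by (simp add: field_simps power2_eq_square)
qed


definition Ef :: "real \<Rightarrow> real \<Rightarrow> real \<Rightarrow> real" where
  "Ef K2 T s = (2/K2)*(1 - exp (- K2 * (T - s) / 2))"
definition af :: "real \<Rightarrow> real \<Rightarrow> real \<Rightarrow> real \<Rightarrow> real" where
  "af K1 K2 T s = (K1/2)*(1 + (K1/2)*Ef K2 T s)*exp (K2 * s/2)"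
definition Af :: "real \<Rightarrow> real \<Rightarrow> real \<Rightarrow> real \<Rightarrow> real" where
  "Af K1 K2 T s = (K1/2)*(2/K2)*(exp (K2 * s/2) - 1) + (K1/2)^2*(2/K2)*((2/K2)*(exp (K2 * s/2) - 1)
          - exp (- K2*T/2)*(exp (K2 * s) - 1)/K2)"

lemma Lambda_eq':
  assumes "K2 \<noteq> 0"
  shows "Lambda K1 K2 s T = 1 + (K1/2) * Ef K2 T s + Af K1 K2 T s * exp (- K2 * s/2)"
  using Lambda_eq[OF assms, of K1 s T] by (simp add: Ef_def Af_def)

lemma A_deriv:
  assumes "K2 \<noteq> 0"
  shows "(Af K1 K2 T has_real_derivative af K1 K2 T s) (at s within X)"
proof -
  have e: "exp (- K2 * (T - s) / 2) * exp (K2 * s/2) = exp (- K2*T/2) * exp (K2 * s)"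
    by (simp add: exp_add[symmetric] algebra_simps add_divide_distrib[symmetric])
  have "(Af K1 K2 T has_real_derivative
     (K1/2)*(2/K2)*(exp (K2 * s/2) * (K2/2)) + (K1/2)^2*(2/K2)*((2/K2)*(exp (K2 * s/2) * (K2/2))
          - exp (- K2*T/2)*(exp (K2 * s) * K2)/K2)) (at s within X)"
    unfolding Af_def[abs_def] apply (auto intro!: derivative_eq_intros)
    by (simp add: mult_ac)
  moreover have "(K1/2)*(2/K2)*(exp (K2 * s/2) * (K2/2)) + (K1/2)^2*(2/K2)*((2/K2)*(exp (K2 * s/2) * (K2/2))
          - exp (- K2*T/2)*(exp (K2 * s) * K2)/K2) = af K1 K2 T s"
  proof -
    have 1: "af K1 K2 T s = (K1/2)*exp (K2 * s/2) + (K1/2)^2*(2/K2)*(exp (K2 * s/2) - exp (- K2 * (T - s) / 2) * exp (K2 * s/2))"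
      by (simp add: af_def Ef_def algebra_simps power2_eq_square)
    have 2: "(K1/2)*(2/K2)*(exp (K2 * s/2) * (K2/2)) + (K1/2)^2*(2/K2)*((2/K2)*(exp (K2 * s/2) * (K2/2))
          - exp (- K2*T/2)*(exp (K2 * s) * K2)/K2) = (K1/2)*exp (K2 * s/2) + (K1/2)^2*(2/K2)*(exp (K2 * s/2) - exp (- K2*T/2) * exp (K2 * s))"
    proof -
      have f1: "(2/K2)*(exp (K2 * s/2) * (K2/2)) = exp (K2 * s/2)" using assms by simp
      have f2: "exp (- K2*T/2)*(exp (K2 * s) * K2)/K2 = exp (- K2*T/2) * exp (K2 * s)" using assms by simp
      show ?thesis unfolding f2 mult.assoc[of "K1/2" "2/K2"] f1 ..
    qed
    show ?thesis unfolding 1 2 e ..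
  qed
  ultimately show ?thesis by simp
qed

lemma E_int:
  assumes "K2 \<noteq> 0" "\<tau> \<le> T"
  shows "((\<lambda>r. exp (- K2 * (r - \<tau>) / 2)) has_integral Ef K2 T \<tau>) {\<tau>..T}"
proof -
  have "((\<lambda>r. exp (- K2 * (r - \<tau>) / 2)) has_integral
      ((\<lambda>r. -(2/K2) * exp (- K2 * (r - \<tau>) / 2)) T - (\<lambda>r. -(2/K2) * exp (- K2 * (r - \<tau>) / 2)) \<tau>)) {\<tau>..T}"
  proof (rule fundamental_theorem_of_calculus[OF assms(2)])
    fix x assume "x \<in> {\<tau>..T}"
    have "((\<lambda>r. -(2/K2) * exp (- K2 * (r - \<tau>) / 2)) has_real_derivative
        -(2/K2) * (exp (- K2 * (x - \<tau>) / 2) * (- K2 / 2))) (at x within {\<tau>..T})"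
      by (auto intro!: derivative_eq_intros)
    then show "((\<lambda>r. -(2/K2) * exp (- K2 * (r - \<tau>) / 2)) has_vector_derivative
        exp (- K2 * (x - \<tau>) / 2)) (at x within {\<tau>..T})"
      using assms(1) by (simp add: has_real_derivative_iff_has_vector_derivative[symmetric])
  qed
  then show ?thesis by (simp add: Ef_def algebra_simps)
qed


lemma swap:
  fixes g a A :: "real \<Rightarrow> real"
  assumes T: "0 \<le> T" and gint: "g integrable_on {0..T}" and finS: "finite S"
    and gc: "\<And>x. x \<in> {0<..<T} - S \<Longrightarrow> isCont g x"
    and ac: "continuous_on {0..T} a"
    and dA: "\<And>s. (A has_real_derivative a s) (at s)" and A0: "A 0 = 0"
    and Agint: "(\<lambda>s. A s * g s) integrable_on {0..T}"
  shows "integral {0..T} (\<lambda>\<tau>. a \<tau> * integral {\<tau>..T} g) = integral {0..T} (\<lambda>s. A s * g s)"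
proof -
  define G where "G \<tau> = integral {0..\<tau>} g" for \<tau>
  have Gc: "continuous_on {0..T} G" unfolding G_def by (rule indefinite_integral_continuous_1[OF gint])
  have J: "integral {\<tau>..T} g = G T - G \<tau>" if "\<tau> \<in> {0..T}" for \<tau>
    using Henstock_Kurzweil_Integration.integral_combine[OF _ _ gint, where c=\<tau>] that unfolding G_def by auto
  have Ac: "continuous_on {0..T} A"
    using dA by (intro continuous_at_imp_continuous_on) (auto intro: DERIV_isCont)
  have dG: "(G has_real_derivative g \<tau>) (at \<tau>)" if \<tau>: "\<tau> \<in> {0<..<T} - S" for \<tau>
  proof -
    have "(G has_vector_derivative g \<tau>) (at \<tau> within ({0..T} - S))"
      unfolding G_def
      by (rule integral_has_vector_derivative_continuous_at[OF gint _ finS])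
         (use \<tau> gc[OF \<tau>] in \<open>auto intro: continuous_at_imp_continuous_at_within\<close>)
    then have "(G has_vector_derivative g \<tau>) (at \<tau> within ({0<..<T} - S))"
      by (rule has_vector_derivative_within_subset) auto
    moreover have "open ({0<..<T} - S)" using finS by (intro open_Diff finite_imp_closed) auto
    ultimately have "(G has_vector_derivative g \<tau>) (at \<tau>)" using at_within_open[of \<tau> "{0<..<T} - S"] \<tau> by simp
    then show ?thesis by (simp add: has_real_derivative_iff_has_vector_derivative)
  qed
  have ftc: "((\<lambda>\<tau>. a \<tau> * G \<tau> + g \<tau> * A \<tau>) has_integral (A T * G T - A 0 * G 0)) {0..T}"
  proof (rule fundamental_theorem_of_calculus_interior_strong[OF finS T])
    fix x assume x: "x \<in> {0<..<T} - S"
    show "((\<lambda>\<tau>. A \<tau> * G \<tau>) has_vector_derivative a x * G x + g x * A x) (at x)"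
      using DERIV_mult[OF dA dG[OF x]] by (simp add: has_real_derivative_iff_has_vector_derivative)
  next
    show "continuous_on {0..T} (\<lambda>\<tau>. A \<tau> * G \<tau>)" by (intro continuous_on_mult Ac Gc)
  qed
  have aGint: "(\<lambda>\<tau>. a \<tau> * G \<tau>) integrable_on {0..T}"
    by (intro integrable_continuous_interval continuous_on_mult ac Gc)
  have e1: "integral {0..T} (\<lambda>\<tau>. a \<tau> * G \<tau>) + integral {0..T} (\<lambda>s. A s * g s) = A T * G T"
    using integral_unique[OF ftc] integral_add[OF aGint Agint] A0 by (simp add: mult.commute)
  have aint: "(a has_integral (A T - A 0)) {0..T}"
    by (rule fundamental_theorem_of_calculus[OF T])
       (use dA in \<open>auto simp: has_real_derivative_iff_has_vector_derivative[symmetric] intro: has_field_derivative_at_within\<close>)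
  have "integral {0..T} (\<lambda>\<tau>. a \<tau> * integral {\<tau>..T} g) = integral {0..T} (\<lambda>\<tau>. G T * a \<tau> - a \<tau> * G \<tau>)"
    by (rule integral_cong) (simp add: J algebra_simps)
  also have "\<dots> = G T * integral {0..T} a - integral {0..T} (\<lambda>\<tau>. a \<tau> * G \<tau>)"
    using integral_diff[OF integrable_on_mult_right[OF has_integral_integrable[OF aint]] aGint] by simp
  also have "\<dots> = integral {0..T} (\<lambda>s. A s * g s)"
    using integral_unique[OF aint] e1 A0 by (simp add: algebra_simps)
  finally show ?thesis .
qed


lemma abstract:
  fixes f :: "real \<Rightarrow> real" and S :: "real set"
  assumes T: "0 \<le> T" and K1: "0 \<le> K1" and K2: "K2 \<noteq> 0"
    and fm: "f \<in> borel_measurable borel" and fnn: "\<And>x. 0 \<le> f x" and fb: "\<And>x. f x \<le> Bf"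
    and finS: "finite S" and fc: "\<And>x. x \<notin> S \<Longrightarrow> isCont f x"
  shows "(\<lambda>\<tau>. (f \<tau> + integral {\<tau>..T} (\<lambda>r. K1/2 * exp (- K2 * (r - \<tau>) / 2) * f r))^2) integrable_on {0..T}
     \<and> integral {0..T} (\<lambda>\<tau>. (f \<tau> + integral {\<tau>..T} (\<lambda>r. K1/2 * exp (- K2 * (r - \<tau>) / 2) * f r))^2)
       \<le> integral {0..T} (\<lambda>\<tau>. Lambda K1 K2 \<tau> T * (f \<tau>)^2)"
proof -
  define k where "k = K1/2"
  have k: "0 \<le> k" using K1 by (simp add: k_def)
  define q where "q r = exp (- K2 * r / 2)" for r
  define p where "p r = exp (K2 * r / 2)" for r
  have pq: "exp (- K2 * (r - \<tau>) / 2) = p \<tau> * q r" for r \<tau>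
    unfolding p_def q_def by (simp add: exp_add[symmetric] algebra_simps add_divide_distrib[symmetric] diff_divide_distrib[symmetric])
  have pq': "exp (- (K2 * (r - \<tau>) / 2)) = p \<tau> * q r" for r \<tau> using pq[of r \<tau>] by simp
  have qc: "continuous_on X q" for X unfolding q_def by (intro continuous_intros) auto
  have pc: "continuous_on X p" for X unfolding p_def by (intro continuous_intros) auto
  have f2m: "(\<lambda>x. (f x)^2) \<in> borel_measurable borel" using fm by measurable
  have intf: "(\<lambda>x. f x * c x) integrable_on {a..b}" if "continuous_on {a..b} c" for a b c
    by (rule int_prodc[OF fm _ that, where B=Bf]) (use fnn fb in \<open>simp\<close>)
  have intf2: "(\<lambda>x. (f x)^2 * c x) integrable_on {a..b}" if "continuous_on {a..b} c" for a b c
  proof (rule int_prodc[OF f2m _ that, where B="Bf^2"])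
    fix x show "\<bar>(f x)^2\<bar> \<le> Bf^2" using fnn[of x] fb[of x] by (simp add: power_mono)
  qed
  define \<Phi> where "\<Phi> \<tau> = integral {\<tau>..T} (\<lambda>r. f r * q r)" for \<tau>
  define J where "J \<tau> = integral {\<tau>..T} (\<lambda>r. (f r)^2 * q r)" for \<tau>
  have \<Phi>c: "continuous_on {0..T} \<Phi>" unfolding \<Phi>_def
    by (rule indefinite_integral_continuous_1'[OF intf[OF qc]])
  have Jc: "continuous_on {0..T} J" unfolding J_def
    by (rule indefinite_integral_continuous_1'[OF intf2[OF qc]])
  have Idef: "integral {\<tau>..T} (\<lambda>r. K1/2 * exp (- K2 * (r - \<tau>) / 2) * f r) = k * p \<tau> * \<Phi> \<tau>" for \<tau>
  proof -
    have "integral {\<tau>..T} (\<lambda>r. K1/2 * exp (- K2 * (r - \<tau>) / 2) * f r) = integral {\<tau>..T} (\<lambda>r. (k * p \<tau>) * (f r * q r))"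
      by (rule integral_cong) (simp add: pq pq' k_def mult_ac)
    then show ?thesis unfolding \<Phi>_def by simp
  qed
  define B where "B \<tau> = (f \<tau> + k * p \<tau> * \<Phi> \<tau>)^2" for \<tau>
  define R where "R \<tau> = (f \<tau>)^2 * (1 + k * Ef K2 T \<tau>) + af K1 K2 T \<tau> * J \<tau>" for \<tau>
  have Bint: "B integrable_on {0..T}"
  proof -
    have "(\<lambda>\<tau>. (f \<tau>)^2 * 1 + f \<tau> * (2 * k * p \<tau> * \<Phi> \<tau>) + (k * p \<tau> * \<Phi> \<tau>)^2) integrable_on {0..T}"
      by (intro integrable_add intf2 intf integrable_continuous_interval continuous_intros pc \<Phi>c)
    then show ?thesis by (rule integrable_eq) (simp add: B_def power2_eq_square algebra_simps)
  qed
  have afc: "continuous_on X (af K1 K2 T)" for X unfolding af_def[abs_def] Ef_def by (intro continuous_intros) auto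
  have Afc: "continuous_on X (Af K1 K2 T)" for X unfolding Af_def[abs_def] by (intro continuous_intros) (auto simp: K2)
  have Efc: "continuous_on X (Ef K2 T)" for X unfolding Ef_def by (intro continuous_intros) auto
  have Rint: "R integrable_on {0..T}" unfolding R_def
    by (intro integrable_add intf2 integrable_continuous_interval continuous_intros afc Efc Jc)
  have BR: "B \<tau> \<le> R \<tau>" if \<tau>: "\<tau> \<in> {0..T}" for \<tau>
  proof -
    define w where "w r = exp (- K2 * (r - \<tau>) / 2)" for r
    have wc: "continuous_on X w" for X unfolding w_def by (intro continuous_intros) auto
    define I0 where "I0 = integral {\<tau>..T} (\<lambda>r. f r * w r)"
    define M0 where "M0 = integral {\<tau>..T} (\<lambda>r. (f r)^2 * w r)"
    have Eint: "(w has_integral Ef K2 T \<tau>) {\<tau>..T}" unfolding w_def using E_int[OF K2] \<tau> by auto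
    have I0: "I0 = p \<tau> * \<Phi> \<tau>"
    proof -
      have "I0 = integral {\<tau>..T} (\<lambda>r. p \<tau> * (f r * q r))"
        unfolding I0_def by (rule integral_cong) (simp add: w_def pq pq' mult_ac)
      then show ?thesis unfolding \<Phi>_def by simp
    qed
    have M0: "M0 = p \<tau> * J \<tau>"
    proof -
      have "M0 = integral {\<tau>..T} (\<lambda>r. p \<tau> * ((f r)^2 * q r))"
        unfolding M0_def by (rule integral_cong) (simp add: w_def pq pq' mult_ac)
      then show ?thesis unfolding J_def by simp
    qed
    have E0: "0 \<le> Ef K2 T \<tau>"
      using has_integral_nonneg[OF Eint] by (simp add: w_def)
    have M0nn: "0 \<le> M0" unfolding M0_def
      by (rule integral_nonneg[OF intf2[OF wc]]) (simp add: w_def)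
    have cs: "0 \<le> M0 - 2*c*I0 + c^2 * Ef K2 T \<tau>" for c
    proof -
      have i1: "(\<lambda>r. (f r)^2 * w r) integrable_on {\<tau>..T}" by (rule intf2[OF wc])
      have i2: "(\<lambda>r. 2*c*(f r * w r)) integrable_on {\<tau>..T}" by (intro integrable_on_mult_right intf[OF wc])
      have i3: "(\<lambda>r. c^2 * w r) integrable_on {\<tau>..T}" by (intro integrable_on_mult_right has_integral_integrable[OF Eint])
      have "integral {\<tau>..T} (\<lambda>r. (f r)^2 * w r - 2*c*(f r * w r) + c^2 * w r)
          = M0 - 2*c*I0 + c^2 * Ef K2 T \<tau>"
        using integral_add[OF integrable_diff[OF i1 i2] i3] integral_diff[OF i1 i2] integral_unique[OF Eint]
        by (simp add: M0_def I0_def)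
      moreover have "0 \<le> integral {\<tau>..T} (\<lambda>r. (f r)^2 * w r - 2*c*(f r * w r) + c^2 * w r)"
      proof (rule integral_nonneg[OF integrable_add[OF integrable_diff[OF i1 i2] i3]])
        fix r
        have "(f r)^2 * w r - 2*c*(f r * w r) + c^2 * w r = w r * (f r - c)^2"
          by (simp add: power2_eq_square algebra_simps)
        also have "\<dots> \<ge> 0" by (simp add: w_def)
        finally show "0 \<le> (f r)^2 * w r - 2*c*(f r * w r) + c^2 * w r" .
      qed
      ultimately show ?thesis by simp
    qed
    have "I0^2 \<le> Ef K2 T \<tau> * M0" by (rule cs_alg[OF cs E0])
    from bound_alg[OF this E0 M0nn k, of "f \<tau>"]
    show ?thesis unfolding B_def R_def I0 M0 af_def k_def by (simp add: mult_ac p_def)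
  qed
  have "integral {0..T} B \<le> integral {0..T} R" by (rule integral_le[OF Bint Rint BR])
  also have "integral {0..T} R = integral {0..T} (\<lambda>\<tau>. (f \<tau>)^2 * (1 + k * Ef K2 T \<tau>))
      + integral {0..T} (\<lambda>\<tau>. af K1 K2 T \<tau> * J \<tau>)"
    unfolding R_def
    by (rule integral_add) (intro intf2 integrable_continuous_interval continuous_intros afc Efc Jc)+
  also have "integral {0..T} (\<lambda>\<tau>. af K1 K2 T \<tau> * J \<tau>) = integral {0..T} (\<lambda>s. (f s)^2 * (Af K1 K2 T s * q s))"
  proof -
    have "integral {0..T} (\<lambda>\<tau>. af K1 K2 T \<tau> * J \<tau>) = integral {0..T} (\<lambda>s. Af K1 K2 T s * ((f s)^2 * q s))"
      unfolding J_def
    proof (rule swap[OF T intf2[OF qc] finS _ afc A_deriv[OF K2]])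
      fix x assume "x \<in> {0<..<T} - S"
      then have "isCont f x" using fc by auto
      then show "isCont (\<lambda>r. (f r)^2 * q r) x" unfolding q_def by (intro continuous_intros) auto
    next
      show "Af K1 K2 T 0 = 0" by (simp add: Af_def)
    next
      have "(\<lambda>s. (f s)^2 * (Af K1 K2 T s * q s)) integrable_on {0..T}"
        by (intro intf2 continuous_intros qc Afc)
      then show "(\<lambda>s. Af K1 K2 T s * ((f s)^2 * q s)) integrable_on {0..T}"
        by (simp add: mult_ac)
    qed
    then show ?thesis by (simp add: mult_ac)
  qed
  also have "integral {0..T} (\<lambda>\<tau>. (f \<tau>)^2 * (1 + k * Ef K2 T \<tau>)) + integral {0..T} (\<lambda>s. (f s)^2 * (Af K1 K2 T s * q s))
     = integral {0..T} (\<lambda>\<tau>. (f \<tau>)^2 * (1 + k * Ef K2 T \<tau>) + (f \<tau>)^2 * (Af K1 K2 T \<tau> * q \<tau>))"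
    by (rule integral_add[symmetric]) (intro intf2 continuous_intros Efc qc Afc)+
  also have "\<dots> = integral {0..T} (\<lambda>\<tau>. Lambda K1 K2 \<tau> T * (f \<tau>)^2)"
    by (rule integral_cong) (simp add: Lambda_eq'[OF K2] k_def q_def algebra_simps)
  finally have main: "integral {0..T} B \<le> integral {0..T} (\<lambda>\<tau>. Lambda K1 K2 \<tau> T * (f \<tau>)^2)" .
  have eqB: "(\<lambda>\<tau>. (f \<tau> + integral {\<tau>..T} (\<lambda>r. K1/2 * exp (- K2 * (r - \<tau>) / 2) * f r))^2) = B"
    by (rule ext) (simp only: Idef B_def)
  show ?thesis unfolding eqB using Bint main by simp
qed


lemma cyl_cont:
  assumes "x \<notin> ts ` {..<N}"
  shows "isCont (\<lambda>s. norm (cyl_grad N ts vs s)) x"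
proof -
  have "isCont (\<lambda>s. if s \<le> ts j then vs j else 0) x" if j: "j < N" for j
  proof -
    have ne: "x \<noteq> ts j" using assms j by auto
    define c where "c = (if x \<le> ts j then vs j else 0)"
    have "continuous (at x within UNIV) (\<lambda>s. c)" by simp
    moreover have "\<forall>x'\<in>UNIV. dist x' x < \<bar>x - ts j\<bar> \<longrightarrow> c = (if x' \<le> ts j then vs j else 0)"
      using ne unfolding c_def dist_real_def by auto
    ultimately have "continuous (at x within UNIV) (\<lambda>s. if s \<le> ts j then vs j else 0)"
      using continuous_transform_within[of x UNIV "\<lambda>s. c" "\<bar>x - ts j\<bar>"] ne by auto
    then show ?thesis by simp
  qed
  then have "isCont (cyl_grad N ts vs) x" unfolding cyl_grad_def[abs_def]
    by (intro continuous_intros) auto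
  then show ?thesis by (intro continuous_intros)
qed

theorem theorem1:
  fixes ric :: "real \<Rightarrow> real^'n^'n"
    and Q :: "real \<Rightarrow> real \<Rightarrow> real^'n^'n"
    and K1 K2 T :: real
    and N :: nat and ts :: "nat \<Rightarrow> real" and vs :: "nat \<Rightarrow> real^'n"
  assumes "T > 0"
    and "K1 \<ge> 0" and "K2 \<noteq> 0" and "K1 + K2 \<ge> 0"
    and ric_cont: "continuous_on {0..T} ric"
    and lower: "\<And>t x. t \<in> {0..T} \<Longrightarrow>
         K2 * (x \<bullet> x) \<le> x \<bullet> ((1/2) *\<^sub>R (ric t + transpose (ric t)) *v x)"
    and upper: "\<And>t. t \<in> {0..T} \<Longrightarrow> onorm (\<lambda>x. ric t *v x) \<le> K1"
    and Q_ode: "\<And>s t. 0 \<le> s \<Longrightarrow> s \<le> t \<Longrightarrow> t \<le> T \<Longrightarrow>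
         ((\<lambda>r. Q r s) has_vector_derivative (- (1/2)) *\<^sub>R (ric t ** Q t s)) (at t within {s..T})"
    and Q_init: "\<And>s. 0 \<le> s \<Longrightarrow> s \<le> T \<Longrightarrow> Q s s = mat 1"
    and ts_mono: "\<And>i j. i < j \<Longrightarrow> j < N \<Longrightarrow> ts i < ts j"
    and ts_range: "\<And>j. j < N \<Longrightarrow> 0 \<le> ts j \<and> ts j \<le> T"
  shows "integral {0..T} (\<lambda>t. (norm (damped_grad Q N ts vs t))\<^sup>2)
         \<le> integral {0..T} (\<lambda>t. Lambda K1 K2 t T * (norm (cyl_grad N ts vs t))\<^sup>2)"
proof -
  define f where "f s = norm (cyl_grad N ts vs s)" for s
  define B where "B \<tau> = (f \<tau> + integral {\<tau>..T} (\<lambda>r. K1/2 * exp (- K2 * (r - \<tau>) / 2) * f r))^2" for \<tau>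
  have fm: "f \<in> borel_measurable borel"
    unfolding f_def[abs_def] cyl_grad_def by (rule step_meas) simp
  have fb: "f x \<le> (\<Sum>j<N. norm (vs j))" for x unfolding f_def cyl_grad_def by (rule step_bound)
  have fc: "isCont f x" if "x \<notin> ts ` {..<N}" for x unfolding f_def[abs_def] by (rule cyl_cont[OF that])
  have abs: "B integrable_on {0..T} \<and> integral {0..T} B \<le> integral {0..T} (\<lambda>\<tau>. Lambda K1 K2 \<tau> T * (f \<tau>)^2)"
    unfolding B_def[abs_def]
    by (rule abstract[OF less_imp_le[OF assms(1)] assms(2) assms(3) fm _ fb _ fc]) (auto simp: f_def)
  have pw: "(norm (damped_grad Q N ts vs \<tau>))^2 \<le> B \<tau>" if "\<tau> \<in> {0..T}" for \<tau>
  proof -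
    have "norm (damped_grad Q N ts vs \<tau>) \<le> f \<tau> + integral {\<tau>..T} (\<lambda>r. K1/2 * exp (- K2 * (r - \<tau>) / 2) * f r)"
      unfolding f_def using pointwise[OF assms(2) lower upper Q_ode Q_init ts_range, where \<tau>=\<tau> and vs=vs] that by auto
    then show ?thesis unfolding B_def by (rule power_mono) simp
  qed
  have "integral {0..T} (\<lambda>t. (norm (damped_grad Q N ts vs t))\<^sup>2) \<le> integral {0..T} B"
  proof (cases "(\<lambda>t. (norm (damped_grad Q N ts vs t))\<^sup>2) integrable_on {0..T}")
    case True
    then show ?thesis using abs pw by (intro integral_le) auto
  next
    case False
    then have "integral {0..T} (\<lambda>t. (norm (damped_grad Q N ts vs t))\<^sup>2) = 0"
      by (rule not_integrable_integral)
    moreover have "0 \<le> integral {0..T} B" using abs by (intro integral_nonneg) (auto simp: B_def)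
    ultimately show ?thesis by simp
  qed
  also have "\<dots> \<le> integral {0..T} (\<lambda>\<tau>. Lambda K1 K2 \<tau> T * (f \<tau>)^2)" using abs by simp
  finally show ?thesis unfolding f_def .
qed

end
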